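(* For every $t\in[0,1)$ the operator $C_t\colon H(\mathbb{D})\to H(\mathbb{D})$ is continuous. Moreover, the set $\{C_t : t\in[0,1)\}$ is equicontinuous in $\mathcal{L}(H(\mathbb{D}))$.
   Context: $\mathbb{D}=\{z\in\mathbb{C}:|z|<1\}$ and $H(\mathbb{D})$ is the space of holomorphic functions on $\mathbb{D}$ endowed with the topology of uniform convergence on compact subsets of $\mathbb{D}$ (a Fréchet space). $\mathcal{L}(H(\mathbb{D}))$ denotes the continuous linear operators on $H(\mathbb{D})$. For $t\in[0,1]$ the generalized Cesàro operator $C_t$ is defined on $f\in H(\mathbb{D})$ by $C_tf(0)=f(0)$ and $C_tf(z)=\frac{1}{z}\int_0^z\frac{f(\xi)}{1-t\xi}\,d\xi$ for $z\in\mathbb{D}\setminus\{0\}$. *)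

theory Defs
  imports "HOL-Complex_Analysis.Complex_Analysis"
begin

abbreviation unit_disc :: "complex set" where
  "unit_disc \<equiv> ball 0 1"

text \<open>The space H(D): holomorphic functions on the disc. To obtain a faithful set of
  points (no junk values outside the disc), functions are normalised to be 0 off the disc.\<close>
definition HD :: "(complex \<Rightarrow> complex) set" where
  "HD = {f. f holomorphic_on unit_disc \<and> (\<forall>z. z \<notin> unit_disc \<longrightarrow> f z = 0)}"

definition HD_top :: "(complex \<Rightarrow> complex) topology" where
  "HD_top = topology_generated_by
     {{g \<in> HD. \<forall>z\<in>K. cmod (g z - f z) < e} | f K e.
        f \<in> HD \<and> compact K \<and> K \<subseteq> unit_disc \<and> e > 0}"

definition cesaro :: "real \<Rightarrow> (complex \<Rightarrow> complex) \<Rightarrow> (complex \<Rightarrow> complex)" where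
  "cesaro t f = (\<lambda>z. if z \<notin> unit_disc then 0
      else if z = 0 then f 0
      else (1 / z) * contour_integral (linepath 0 z) (\<lambda>\<xi>. f \<xi> / (1 - complex_of_real t * \<xi>)))"

definition equicontinuous_family ::
  "'a topology \<Rightarrow> 'a \<Rightarrow> ('i \<Rightarrow> 'a \<Rightarrow> 'a) \<Rightarrow> 'i set \<Rightarrow> bool" where
  "equicontinuous_family X z T I \<longleftrightarrow>
     (\<forall>V. (\<exists>W. openin X W \<and> z \<in> W \<and> W \<subseteq> V) \<longrightarrow>
        (\<exists>U. openin X U \<and> z \<in> U \<and> (\<forall>i\<in>I. T i ` U \<subseteq> V)))"

end

theory Submission
  imports Defs
begin

definition Bnb :: "(complex \<Rightarrow> complex) \<Rightarrow> complex set \<Rightarrow> real \<Rightarrow> (complex \<Rightarrow> complex) set" where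
  "Bnb x K d = {g \<in> HD. \<forall>z\<in>K. cmod (g z - x z) < d}"

lemma HD_topspace: "topspace HD_top = HD"
  unfolding HD_top_def topology_generated_by_topspace
proof
  show "\<Union> {{g \<in> HD. \<forall>z\<in>K. cmod (g z - f z) < e} | f K e.
        f \<in> HD \<and> compact K \<and> K \<subseteq> unit_disc \<and> e > 0} \<subseteq> HD" by blast
  show "HD \<subseteq> \<Union> {{g \<in> HD. \<forall>z\<in>K. cmod (g z - f z) < e} | f K e.
        f \<in> HD \<and> compact K \<and> K \<subseteq> unit_disc \<and> e > 0}"
  proof
    fix x assume "x \<in> HD"
    then show "x \<in> \<Union> {{g \<in> HD. \<forall>z\<in>K. cmod (g z - f z) < e} | f K e.
        f \<in> HD \<and> compact K \<and> K \<subseteq> unit_disc \<and> e > 0}"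
      apply (intro UnionI[of "{g \<in> HD. \<forall>z\<in>{}. cmod (g z - x z) < 1}"])
       apply (rule CollectI, rule exI[of _ x], rule exI[of _ "{}"], rule exI[of _ 1])
      by auto
  qed
qed

lemma Bnb_open:
  assumes "x \<in> HD" "compact K" "K \<subseteq> unit_disc" "d > 0"
  shows "openin HD_top (Bnb x K d)"
  unfolding HD_top_def Bnb_def
  by (rule topology_generated_by_Basis) (use assms in blast)

lemma Bnb_center: "x \<in> HD \<Longrightarrow> d > 0 \<Longrightarrow> x \<in> Bnb x K d"
  by (auto simp: Bnb_def)

lemma HD_cont: "x \<in> HD \<Longrightarrow> continuous_on unit_disc x"
  by (auto simp: HD_def intro: holomorphic_on_imp_continuous_on)

lemma nbhd_lemma:
  assumes "openin HD_top W" "x \<in> W"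
  shows "\<exists>K d. compact K \<and> K \<subseteq> unit_disc \<and> d > 0 \<and> Bnb x K d \<subseteq> W"
proof -
  have "generate_topology_on {{g \<in> HD. \<forall>z\<in>K. cmod (g z - f z) < e} | f K e.
        f \<in> HD \<and> compact K \<and> K \<subseteq> unit_disc \<and> e > 0} W"
    using assms(1) unfolding HD_top_def by (rule openin_topology_generated_by)
  then show ?thesis using assms(2)
  proof (induction arbitrary: x)
    case Empty
    then show ?case by simp
  next
    case (Int a b)
    then obtain K1 d1 K2 d2 where 1: "compact K1" "K1 \<subseteq> unit_disc" "d1 > 0" "Bnb x K1 d1 \<subseteq> a"
      and 2: "compact K2" "K2 \<subseteq> unit_disc" "d2 > 0" "Bnb x K2 d2 \<subseteq> b"
      by (meson IntE)
    have "Bnb x (K1 \<union> K2) (min d1 d2) \<subseteq> a \<inter> b"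
      using 1(4) 2(4) by (auto simp: Bnb_def)
    moreover have "compact (K1 \<union> K2)" using 1(1) 2(1) by (rule compact_Un)
    moreover have "K1 \<union> K2 \<subseteq> unit_disc" using 1(2) 2(2) by (rule Un_least)
    moreover have "min d1 d2 > 0" using 1(3) 2(3) by simp
    ultimately show ?case by blast
  next
    case (UN K)
    from UN.prems obtain k where k: "k \<in> K" "x \<in> k" by (rule UnionE)
    obtain K' d where "compact K'" "K' \<subseteq> unit_disc" "d > 0" "Bnb x K' d \<subseteq> k"
      using UN.IH[OF k] by blast
    moreover have "k \<subseteq> \<Union>K" using k(1) by blast
    ultimately show ?case by (meson order_trans)
  next
    case (Basis s)
    then obtain f K e where s: "s = {g \<in> HD. \<forall>z\<in>K. cmod (g z - f z) < e}"
      and f: "f \<in> HD" "compact K" "K \<subseteq> unit_disc" "e > 0" by blast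
    have xH: "x \<in> HD" and xK: "\<forall>z\<in>K. cmod (x z - f z) < e" using Basis.prems s by auto
    show ?case
    proof (cases "K = {}")
      case True
      have "Bnb x {} 1 \<subseteq> s" unfolding s True Bnb_def by simp
      then show ?thesis by (intro exI[of _ "{}"] exI[of _ 1]) simp
    next
      case False
      have "continuous_on K (\<lambda>z. cmod (x z - f z))"
        using continuous_on_subset[OF HD_cont[OF xH] f(3)] continuous_on_subset[OF HD_cont[OF f(1)] f(3)]
        by (intro continuous_intros)
      then have "compact ((\<lambda>z. cmod (x z - f z)) ` K)"
        using f(2) compact_continuous_image by blast
      then obtain m where m: "m \<in> K" "\<forall>z\<in>K. cmod (x z - f z) \<le> cmod (x m - f m)"
        using False compact_attains_sup[of "(\<lambda>z. cmod (x z - f z)) ` K"] by auto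
      define d where "d = e - cmod (x m - f m)"
      have d: "d > 0" using xK m unfolding d_def by auto
      have "Bnb x K d \<subseteq> s"
      proof
        fix g assume g: "g \<in> Bnb x K d"
        have "cmod (g z - f z) < e" if "z \<in> K" for z
        proof -
          have "cmod (g z - f z) \<le> cmod (g z - x z) + cmod (x z - f z)"
            using norm_triangle_ineq[of "g z - x z" "x z - f z"] by simp
          also have "\<dots> < d + cmod (x m - f m)"
            using g that m by (intro add_less_le_mono) (auto simp: Bnb_def)
          finally show ?thesis unfolding d_def by simp
        qed
        then show "g \<in> s" using g s by (auto simp: Bnb_def)
      qed
      then show ?thesis using f d by blast
    qed
  qed
qed

lemma open_by_nbhd:
  assumes "U \<subseteq> HD" "\<And>u. u \<in> U \<Longrightarrow> \<exists>K d. compact K \<and> K \<subseteq> unit_disc \<and> d > 0 \<and> Bnb u K d \<subseteq> U"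
  shows "openin HD_top U"
proof (rule openin_subopen[THEN iffD2], intro ballI)
  fix u assume u: "u \<in> U"
  then obtain K d where Kd: "compact K" "K \<subseteq> unit_disc" "d > 0" "Bnb u K d \<subseteq> U"
    using assms(2) by blast
  have uH: "u \<in> HD" using u assms(1) by blast
  show "\<exists>T. openin HD_top T \<and> u \<in> T \<and> T \<subseteq> U"
    apply (rule exI[of _ "Bnb u K d"])
    using Bnb_open[OF uH Kd(1,2,3)] Bnb_center[OF uH Kd(3)] Kd(4) by simp
qed

lemma compact_in_cball:
  assumes "compact K" "K \<subseteq> unit_disc"
  shows "\<exists>r. 0 \<le> r \<and> r < 1 \<and> K \<subseteq> cball 0 r"
proof (cases "K = {}")
  case True then show ?thesis by (intro exI[of _ 0]) auto
next
  case False
  have "compact (norm ` K)" using assms compact_continuous_image continuous_on_norm_id by blast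
  then obtain m where m: "m \<in> K" "\<forall>z\<in>K. norm z \<le> norm m"
    using False compact_attains_sup[of "norm ` K"] by auto
  have "norm m < 1" using m(1) assms(2) by auto
  moreover have "K \<subseteq> cball 0 (norm m)" using m(2) by (auto simp: subset_iff)
  ultimately show ?thesis by (intro exI[of _ "norm m"]) simp
qed


lemma denom_bound:
  assumes "0 \<le> t" "t < 1" "norm \<xi> \<le> r"
  shows "1 - r \<le> cmod (1 - complex_of_real t * \<xi>)"
proof -
  have "norm (complex_of_real t * \<xi>) = t * norm \<xi>" using assms(1) by (simp add: norm_mult)
  also have "\<dots> \<le> norm \<xi>" using assms(1,2) by (simp add: mult_left_le_one_le)
  finally have "norm (complex_of_real t * \<xi>) \<le> r" using assms(3) by linarith
  moreover have "norm (1::complex) - norm (complex_of_real t * \<xi>) \<le> cmod (1 - complex_of_real t * \<xi>)"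
    by (rule norm_triangle_ineq2)
  ultimately show ?thesis by simp
qed

lemma denom_nz:
  assumes "0 \<le> t" "t < 1" "\<xi> \<in> unit_disc"
  shows "1 - complex_of_real t * \<xi> \<noteq> 0"
proof -
  have "1 - norm \<xi> \<le> cmod (1 - complex_of_real t * \<xi>)"
    using denom_bound[OF assms(1,2), of \<xi> "norm \<xi>"] by simp
  moreover have "norm \<xi> < 1" using assms(3) by simp
  ultimately show ?thesis by auto
qed

lemma integrand_cont:
  assumes "0 \<le> t" "t < 1" "u \<in> HD" "S \<subseteq> unit_disc"
  shows "continuous_on S (\<lambda>\<xi>. u \<xi> / (1 - complex_of_real t * \<xi>))"
proof -
  have "continuous_on S u" using continuous_on_subset[OF HD_cont[OF assms(3)] assms(4)] .
  moreover have "continuous_on S (\<lambda>\<xi>. 1 - complex_of_real t * \<xi>)" by (intro continuous_intros)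
  ultimately show ?thesis using denom_nz[OF assms(1,2)] assms(4)
    by (intro continuous_on_divide) auto
qed

lemma cesaro_est:
  assumes t: "0 \<le> t" "t < 1" and u: "u \<in> HD" and v: "v \<in> HD" and r: "0 \<le> r" "r < 1"
    and bd: "\<forall>w\<in>cball 0 r. cmod (v w - u w) \<le> d" and z: "z \<in> cball 0 r"
  shows "cmod (cesaro t v z - cesaro t u z) \<le> d / (1 - r)"
proof -
  have zD: "z \<in> unit_disc" using z r by auto
  have d0: "0 \<le> d" using bd r by (metis centre_in_cball norm_ge_zero order_trans)
  have r1: "0 < 1 - r" using r by simp
  show ?thesis
  proof (cases "z = 0")
    case True
    have "cmod (v 0 - u 0) \<le> d" using bd r by simp
    also have "d \<le> d / (1 - r)" using d0 r r1 by (simp add: le_divide_eq mult_left_le)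
    finally show ?thesis using True zD by (simp add: cesaro_def)
  next
    case False
    have seg: "closed_segment 0 z \<subseteq> cball 0 r"
      using z r by (intro closed_segment_subset) auto
    have segD: "closed_segment 0 z \<subseteq> unit_disc" using seg r by auto
    define hv where "hv = (\<lambda>\<xi>. v \<xi> / (1 - complex_of_real t * \<xi>))"
    define hu where "hu = (\<lambda>\<xi>. u \<xi> / (1 - complex_of_real t * \<xi>))"
    have iv: "(hv has_contour_integral contour_integral (linepath 0 z) hv) (linepath 0 z)"
      unfolding hv_def
      by (intro has_contour_integral_integral contour_integrable_continuous_linepath integrand_cont t v segD)
    have iu: "(hu has_contour_integral contour_integral (linepath 0 z) hu) (linepath 0 z)"
      unfolding hu_def
      by (intro has_contour_integral_integral contour_integrable_continuous_linepath integrand_cont t u segD)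
    have idiff: "((\<lambda>x. hv x - hu x) has_contour_integral
        (contour_integral (linepath 0 z) hv - contour_integral (linepath 0 z) hu)) (linepath 0 z)"
      by (rule has_contour_integral_diff[OF iv iu])
    have pt: "norm (hv \<xi> - hu \<xi>) \<le> d / (1 - r)" if "\<xi> \<in> closed_segment 0 z" for \<xi>
    proof -
      have xr: "norm \<xi> \<le> r" using seg that by auto
      have den: "1 - r \<le> cmod (1 - complex_of_real t * \<xi>)" by (rule denom_bound[OF t xr])
      have "hv \<xi> - hu \<xi> = (v \<xi> - u \<xi>) / (1 - complex_of_real t * \<xi>)"
        unfolding hv_def hu_def by (simp add: diff_divide_distrib)
      then have "norm (hv \<xi> - hu \<xi>) = cmod (v \<xi> - u \<xi>) / cmod (1 - complex_of_real t * \<xi>)"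
        by (simp add: norm_divide)
      also have "\<dots> \<le> d / (1 - r)"
        using bd xr den r1 d0 by (intro frac_le) auto
      finally show ?thesis .
    qed
    have "norm (contour_integral (linepath 0 z) hv - contour_integral (linepath 0 z) hu) \<le> d / (1 - r) * norm (z - 0)"
      by (rule has_contour_integral_bound_linepath[OF idiff]) (use d0 r1 pt in auto)
    moreover have "cesaro t v z - cesaro t u z
        = (contour_integral (linepath 0 z) hv - contour_integral (linepath 0 z) hu) / z"
      using zD False unfolding cesaro_def hv_def hu_def by (simp add: field_simps)
    ultimately show ?thesis using False by (simp add: norm_divide divide_le_eq)
  qed
qed


lemma cesaro_HD:
  assumes t: "0 \<le> t" "t < 1" and f: "f \<in> HD"
  shows "cesaro t f \<in> HD"
proof -
  define h where "h = (\<lambda>\<xi>. f \<xi> / (1 - complex_of_real t * \<xi>))"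
  have fh: "f holomorphic_on unit_disc" using f by (simp add: HD_def)
  have hh: "h holomorphic_on unit_disc"
    unfolding h_def using fh denom_nz[OF t] by (intro holomorphic_intros) auto
  obtain G where G: "\<And>x. x \<in> unit_disc \<Longrightarrow> (G has_field_derivative h x) (at x within unit_disc)"
    using holomorphic_convex_primitive'[OF convex_ball open_ball hh] by blast
  have G': "(G has_field_derivative h x) (at x)" if "x \<in> unit_disc" for x
    using G[OF that] at_within_open[OF that open_ball] by simp
  have ci: "contour_integral (linepath 0 z) h = G z - G 0" if z: "z \<in> unit_disc" for z
  proof -
    have "closed_segment 0 z \<subseteq> unit_disc" using z by (intro closed_segment_subset) auto
    then have "(h has_contour_integral (G (pathfinish (linepath 0 z)) - G (pathstart (linepath 0 z)))) (linepath 0 z)"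
      by (intro contour_integral_primitive[OF G]) auto
    then show ?thesis by (simp add: contour_integral_unique)
  qed
  define q where "q = (\<lambda>z. if z = 0 then f 0 else (G z - G 0) / z)"
  have Gh: "G holomorphic_on unit_disc"
    unfolding holomorphic_on_def field_differentiable_def using G by blast
  have q1: "q holomorphic_on (unit_disc - {0})"
  proof -
    have "(\<lambda>z. (G z - G 0) / z) holomorphic_on (unit_disc - {0})"
      using holomorphic_on_subset[OF Gh] by (intro holomorphic_intros) auto
    then show ?thesis by (rule holomorphic_transform) (simp add: q_def)
  qed
  have "((\<lambda>y. (G y - G 0) / (y - 0)) \<longlongrightarrow> h 0) (at 0 within unit_disc)"
    using G[of 0] unfolding has_field_derivative_iff by simp
  moreover have "h 0 = q 0" by (simp add: h_def q_def)
  moreover have "\<forall>\<^sub>F y in at 0 within unit_disc. (G y - G 0) / (y - 0) = q y"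
    by (simp add: eventually_at_filter q_def)
  ultimately have lim: "(q \<longlongrightarrow> q 0) (at 0 within unit_disc)"
    using tendsto_cong by fastforce
  have qh: "q holomorphic_on unit_disc"
    by (rule no_isolated_singularity'[OF _ q1 open_ball]) (use lim in auto)
  have "cesaro t f holomorphic_on unit_disc"
  proof (rule holomorphic_transform[OF qh])
    fix z assume z: "z \<in> unit_disc"
    show "q z = cesaro t f z"
      using z ci[OF z] by (simp add: q_def cesaro_def h_def)
  qed
  then show ?thesis by (simp add: HD_def cesaro_def)
qed

lemma cesaro_zero: "cesaro t (\<lambda>z. 0) = (\<lambda>z. 0)"
  by (simp add: cesaro_def fun_eq_iff)

lemma zero_HD: "(\<lambda>z. 0) \<in> HD"
  by (simp add: HD_def)


lemma transfer_nbhd: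
  assumes t: "0 \<le> t" "t < 1" and u: "u \<in> HD" and K: "compact K" "K \<subseteq> unit_disc" and d: "d > 0"
  shows "\<exists>r. 0 \<le> r \<and> r < 1 \<and> (\<forall>v \<in> Bnb u (cball 0 r) (d * (1 - r) / 2). cesaro t v \<in> Bnb (cesaro t u) K d)"
proof -
  obtain r where r: "0 \<le> r" "r < 1" "K \<subseteq> cball 0 r" using compact_in_cball[OF K] by blast
  have r1: "0 < 1 - r" using r by simp
  have "cesaro t v \<in> Bnb (cesaro t u) K d" if v: "v \<in> Bnb u (cball 0 r) (d * (1 - r) / 2)" for v
  proof -
    have vH: "v \<in> HD" using v by (simp add: Bnb_def)
    have bd: "\<forall>w\<in>cball 0 r. cmod (v w - u w) \<le> d * (1 - r) / 2"
      using v by (auto simp: Bnb_def less_imp_le)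
    have "cmod (cesaro t v z - cesaro t u z) < d" if z: "z \<in> K" for z
    proof -
      have "cmod (cesaro t v z - cesaro t u z) \<le> (d * (1 - r) / 2) / (1 - r)"
        using cesaro_est[OF t u vH r(1,2) bd] z r(3) by blast
      also have "\<dots> = d / 2" using r1 by (simp add: field_simps)
      also have "\<dots> < d" using d by simp
      finally show ?thesis .
    qed
    then show ?thesis using cesaro_HD[OF t vH] by (simp add: Bnb_def)
  qed
  then show ?thesis using r by blast
qed

lemma cont_part: "\<forall>t\<in>{0..<1}. continuous_map HD_top HD_top (cesaro t)"
  proof
    fix t :: real assume "t \<in> {0..<1}"
    then have t: "0 \<le> t" "t < 1" by auto
    show "continuous_map HD_top HD_top (cesaro t)"
      unfolding continuous_map_def HD_topspace
    proof (intro conjI allI impI Pi_I)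
      fix x assume "x \<in> HD" then show "cesaro t x \<in> HD" by (rule cesaro_HD[OF t])
    next
      fix W assume W: "openin HD_top W"
      show "openin HD_top {x \<in> HD. cesaro t x \<in> W}"
      proof (rule open_by_nbhd)
        fix u assume "u \<in> {x \<in> HD. cesaro t x \<in> W}"
        then have u: "u \<in> HD" "cesaro t u \<in> W" by auto
        obtain K d where Kd: "compact K" "K \<subseteq> unit_disc" "d > 0" "Bnb (cesaro t u) K d \<subseteq> W"
          using nbhd_lemma[OF W u(2)] by blast
        obtain r where r: "0 \<le> r" "r < 1"
          and tr: "\<forall>v \<in> Bnb u (cball 0 r) (d * (1 - r) / 2). cesaro t v \<in> Bnb (cesaro t u) K d"
          using transfer_nbhd[OF t u(1) Kd(1,2,3)] by blast
        have "Bnb u (cball 0 r) (d * (1 - r) / 2) \<subseteq> {x \<in> HD. cesaro t x \<in> W}"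
          using tr Kd(4) by (auto simp: Bnb_def)
        moreover have "cball 0 r \<subseteq> unit_disc" using r by auto
        moreover have "d * (1 - r) / 2 > 0" using r Kd(3) by simp
        ultimately show "\<exists>K d. compact K \<and> K \<subseteq> unit_disc \<and> d > 0 \<and> Bnb u K d \<subseteq> {x \<in> HD. cesaro t x \<in> W}"
          using compact_cball by blast
      qed auto
    qed
  qed

lemma equi_part: "equicontinuous_family HD_top (\<lambda>z. 0) cesaro {0..<1}"
    unfolding equicontinuous_family_def
  proof (intro allI impI)
    fix V assume "\<exists>W. openin HD_top W \<and> (\<lambda>z. 0) \<in> W \<and> W \<subseteq> V"
    then obtain W where W: "openin HD_top W" "(\<lambda>z. 0) \<in> W" "W \<subseteq> V" by blast
    obtain K d where Kd: "compact K" "K \<subseteq> unit_disc" "d > 0" "Bnb (\<lambda>z. 0) K d \<subseteq> W"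
      using nbhd_lemma[OF W(1,2)] by blast
    obtain r where r: "0 \<le> r" "r < 1" "K \<subseteq> cball 0 r" using compact_in_cball[OF Kd(1,2)] by blast
    have d': "d * (1 - r) / 2 > 0" using r Kd(3) by simp
    have cb: "cball 0 r \<subseteq> unit_disc" using r by auto
    define U where "U = Bnb (\<lambda>z. 0) (cball 0 r) (d * (1 - r) / 2)"
    have "openin HD_top U" unfolding U_def by (rule Bnb_open[OF zero_HD compact_cball cb d'])
    moreover have "(\<lambda>z. 0) \<in> U" unfolding U_def by (rule Bnb_center[OF zero_HD d'])
    moreover have "\<forall>i\<in>{0..<1}. cesaro i ` U \<subseteq> V"
    proof (intro ballI subsetI)
      fix t :: real and y assume "t \<in> {0..<1}" and y: "y \<in> cesaro t ` U"
      then have t: "0 \<le> t" "t < 1" by auto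
      obtain v where v: "v \<in> U" "y = cesaro t v" using y by blast
      have vH: "v \<in> HD" using v(1) by (simp add: U_def Bnb_def)
      have r1: "0 < 1 - r" using r by simp
      have bd: "\<forall>w\<in>cball 0 r. cmod (v w - 0) \<le> d * (1 - r) / 2"
        using v(1) by (auto simp: U_def Bnb_def less_imp_le)
      have "cmod (cesaro t v z - 0) < d" if z: "z \<in> K" for z
      proof -
        have "cmod (cesaro t v z - cesaro t (\<lambda>z. 0) z) \<le> (d * (1 - r) / 2) / (1 - r)"
          using cesaro_est[OF t zero_HD vH r(1,2) bd] z r(3) by blast
        also have "\<dots> = d / 2" using r1 by (simp add: field_simps)
        also have "\<dots> < d" using Kd(3) by simp
        finally show ?thesis by (simp add: cesaro_zero)
      qed
      then have "cesaro t v \<in> Bnb (\<lambda>z. 0) K d" using cesaro_HD[OF t vH] by (simp add: Bnb_def)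
      then show "y \<in> V" using v(2) Kd(4) W(3) by blast
    qed
    ultimately show "\<exists>U. openin HD_top U \<and> (\<lambda>z. 0) \<in> U \<and> (\<forall>i\<in>{0..<1}. cesaro i ` U \<subseteq> V)"
      by blast
  qed

theorem proposition2p1:
  shows "(\<forall>t\<in>{0..<1}. continuous_map HD_top HD_top (cesaro t))
       \<and> equicontinuous_family HD_top (\<lambda>z. 0) cesaro {0..<1}"
  by (rule conjI[OF cont_part equi_part])

end
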